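(* Let $M,K$ be real symmetric positive definite $N\times N$ matrices, $\Delta t>0$, and let $(f_{k+\frac12})_{k\ge0}$ be vectors in $\mathbb{R}^N$. Let $(q_n,p_n)_{n\ge0}$ satisfy, for all $n\ge0$, $$q_{n+1}=q_n+\Delta t\,M^{-1}\frac{p_n+p_{n+1}}2,\qquad p_{n+1}=p_n-\Delta t\,K\frac{q_n+q_{n+1}}2+\Delta t\,f_{n+\frac12}.$$ Let $E_n:=\frac12p_n^TM^{-1}p_n+\frac12q_n^TKq_n$ and $|f|_{M^{-1}}:=\sqrt{f^TM^{-1}f}$. Then for every $n\ge0$, $$\big|\sqrt{E_n}-\sqrt{E_0}\big|\le\Delta t\,2^{-1/2}\sum_{k=0}^{n-1}|f_{k+\frac12}|_{M^{-1}}.$$ *)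

theory Defs
  imports "HOL-Analysis.Analysis"
begin

definition sym_pos_def_mat :: "real^'n^'n \<Rightarrow> bool" where
  "sym_pos_def_mat A \<longleftrightarrow> transpose A = A \<and> (\<forall>x. x \<noteq> 0 \<longrightarrow> x \<bullet> (A *v x) > 0)"

definition energy :: "real^'n^'n \<Rightarrow> real^'n^'n \<Rightarrow> real^'n \<Rightarrow> real^'n \<Rightarrow> real" where
  "energy M K q p = (1/2) * (p \<bullet> (matrix_inv M *v p)) + (1/2) * (q \<bullet> (K *v q))"

definition norm_Minv :: "real^'n^'n \<Rightarrow> real^'n \<Rightarrow> real" where
  "norm_Minv M f = sqrt (f \<bullet> (matrix_inv M *v f))"

end

theory Submission
  imports Defs
begin

lemma cs_form:
  fixes a b c :: real
  assumes h: "\<And>t. 0 \<le> a + 2*t*b + t^2*c" and a: "0 \<le> a" and c: "0 \<le> c"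
  shows "\<bar>b\<bar> \<le> sqrt a * sqrt c"
proof -
  have "b^2 \<le> a*c"
  proof (cases "c = 0")
    case True
    show ?thesis
    proof (rule ccontr)
      assume "\<not> ?thesis"
      hence "b \<noteq> 0" using True by auto
      have "0 \<le> a + 2*(-(a+1)/(2*b))*b" using h[of "-(a+1)/(2*b)"] True by simp
      also have "\<dots> = -1" using \<open>b\<noteq>0\<close> by (simp add: field_simps)
      finally show False by simp
    qed
  next
    case False
    hence cp: "c > 0" using c by simp
    have "0 \<le> a + 2*(-b/c)*b + (-b/c)^2*c" using h by blast
    also have "\<dots> = a - b^2/c" using cp by (simp add: field_simps power2_eq_square)
    finally show ?thesis using cp by (simp add: field_simps)
  qed
  hence "sqrt (b^2) \<le> sqrt (a*c)" by (rule real_sqrt_le_mono)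
  thus ?thesis by (simp add: real_sqrt_mult)
qed

lemma half_le: "2 * (a::real) \<le> y \<Longrightarrow> a \<le> y / 2" by simp

lemma form_sym:
  fixes A :: "real^'n^'n"
  assumes "transpose A = A"
  shows "x \<bullet> (A *v y) = y \<bullet> (A *v x)"
proof -
  have "x \<bullet> (A *v y) = (x v* A) \<bullet> y" by (simp add: dot_lmul_matrix)
  also have "\<dots> = (transpose A *v x) \<bullet> y" by simp
  also have "\<dots> = y \<bullet> (A *v x)" using assms by (simp add: inner_commute)
  finally show ?thesis .
qed

lemma spd_inv:
  fixes M :: "real^'n^'n"
  assumes "sym_pos_def_mat M"
  shows "\<And>x y. x \<bullet> (matrix_inv M *v y) = y \<bullet> (matrix_inv M *v x)"
    and "\<And>x. 0 \<le> x \<bullet> (matrix_inv M *v x)"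
proof -
  have T: "transpose M = M" and P: "\<And>x. x \<noteq> 0 \<Longrightarrow> x \<bullet> (M *v x) > 0"
    using assms unfolding sym_pos_def_mat_def by auto
  have "\<forall>x. M *v x = 0 \<longrightarrow> x = 0" using P by force
  hence "invertible M" unfolding invertible_left_inverse matrix_left_invertible_ker .
  hence "\<exists>A'. M ** A' = mat 1 \<and> A' ** M = mat 1" unfolding invertible_def .
  hence MW: "M ** matrix_inv M = mat 1" unfolding matrix_inv_def by (metis (mono_tags, lifting) someI_ex)
  have xe: "M *v (matrix_inv M *v x) = x" for x
    by (simp add: matrix_vector_mul_assoc MW)
  show "x \<bullet> (matrix_inv M *v y) = y \<bullet> (matrix_inv M *v x)" for x y
  proof -
    have "x \<bullet> (matrix_inv M *v y) = (M *v (matrix_inv M *v x)) \<bullet> (matrix_inv M *v y)"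
      by (simp add: xe)
    also have "\<dots> = (matrix_inv M *v y) \<bullet> (M *v (matrix_inv M *v x))" by (simp add: inner_commute)
    also have "\<dots> = (matrix_inv M *v x) \<bullet> (M *v (matrix_inv M *v y))" using form_sym[OF T] by blast
    also have "\<dots> = y \<bullet> (matrix_inv M *v x)" by (simp add: xe inner_commute)
    finally show ?thesis .
  qed
  show "0 \<le> x \<bullet> (matrix_inv M *v x)" for x
  proof -
    have "x \<bullet> (matrix_inv M *v x) = (matrix_inv M *v x) \<bullet> (M *v (matrix_inv M *v x))"
      by (simp add: xe inner_commute)
    also have "\<dots> \<ge> 0" using P[of "matrix_inv M *v x"] by (cases "matrix_inv M *v x = 0") auto
    finally show ?thesis by simp
  qed
qed

lemma cs_mat:
  fixes W :: "real^'n^'n"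
  assumes S: "\<And>x y. x \<bullet> (W *v y) = y \<bullet> (W *v x)" and P: "\<And>x. 0 \<le> x \<bullet> (W *v x)"
  shows "\<bar>x \<bullet> (W *v y)\<bar> \<le> sqrt (x \<bullet> (W *v x)) * sqrt (y \<bullet> (W *v y))"
proof (rule cs_form[OF _ P P])
  fix t :: real
  have "(x + t *\<^sub>R y) \<bullet> (W *v (x + t *\<^sub>R y)) = x \<bullet> (W *v x) + 2*t*(x \<bullet> (W *v y)) + t^2*(y \<bullet> (W *v y))"
    using S[of y x] by (simp add: matrix_vector_right_distrib matrix_vector_mult_scaleR inner_add_left inner_add_right power2_eq_square algebra_simps)
  thus "0 \<le> x \<bullet> (W *v x) + 2*t*(x \<bullet> (W *v y)) + t^2*(y \<bullet> (W *v y))" using P[of "x + t *\<^sub>R y"] by simp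
qed


theorem mainTheorem2:
  fixes M K :: "real^'n^'n" and dt :: real
    and f q p :: "nat \<Rightarrow> real^'n"
  assumes "sym_pos_def_mat M" and "sym_pos_def_mat K" and "dt > 0"
    and "\<And>n. q (Suc n) = q n + dt *\<^sub>R (matrix_inv M *v ((1/2) *\<^sub>R (p n + p (Suc n))))"
    and "\<And>n. p (Suc n) = p n - dt *\<^sub>R (K *v ((1/2) *\<^sub>R (q n + q (Suc n)))) + dt *\<^sub>R f n"
  shows "\<bar>sqrt (energy M K (q n) (p n)) - sqrt (energy M K (q 0) (p 0))\<bar>
           \<le> dt * (1 / sqrt 2) * (\<Sum>k<n. norm_Minv M (f k))"
proof -
  define W where "W = matrix_inv M"
  have SW: "\<And>x y. x \<bullet> (W *v y) = y \<bullet> (W *v x)" and PW: "\<And>x. 0 \<le> x \<bullet> (W *v x)"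
    using spd_inv[OF assms(1)] unfolding W_def by auto
  have TK: "transpose K = K" and PK': "\<And>x. x \<noteq> 0 \<Longrightarrow> x \<bullet> (K *v x) > 0"
    using assms(2) unfolding sym_pos_def_mat_def by auto
  have SK: "\<And>x y. x \<bullet> (K *v y) = y \<bullet> (K *v x)" using form_sym[OF TK] by blast
  have PK: "0 \<le> x \<bullet> (K *v x)" for x using PK'[of x] by (cases "x = 0") auto
  define E where "E n = energy M K (q n) (p n)" for n
  have E_def': "E n = (1/2) * (p n \<bullet> (W *v p n)) + (1/2) * (q n \<bullet> (K *v q n))" for n
    unfolding E_def energy_def W_def by simp
  have E0: "0 \<le> E n" for n unfolding E_def' using PW[of "p n"] PK[of "q n"] by simp
  have step: "\<bar>sqrt (E (Suc n)) - sqrt (E n)\<bar> \<le> dt * (1 / sqrt 2) * norm_Minv M (f n)" for n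
  proof -
    define P where "P = p n"
    define P' where "P' = p (Suc n)"
    define Q where "Q = q n"
    define Q' where "Q' = q (Suc n)"
    define F where "F = f n"
    define u where "u = P + P'"
    define s where "s = Q + Q'"
    have dP: "P' - P = dt *\<^sub>R F - (dt/2) *\<^sub>R (K *v s)"
      using assms(5)[of n] unfolding P_def P'_def F_def s_def Q_def Q'_def
      by (simp add: matrix_vector_mult_scaleR algebra_simps)
    have dQ: "Q' - Q = (dt/2) *\<^sub>R (W *v u)"
      using assms(4)[of n] unfolding W_def u_def P_def P'_def Q_def Q'_def
      by (simp add: matrix_vector_mult_scaleR algebra_simps)
    have e1: "P' \<bullet> (W *v P') - P \<bullet> (W *v P) = u \<bullet> (W *v (P' - P))"
      unfolding u_def using SW[of P P'] by (simp add: matrix_vector_mult_diff_distrib inner_add_left inner_diff_right)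
    have e2: "Q' \<bullet> (K *v Q') - Q \<bullet> (K *v Q) = s \<bullet> (K *v (Q' - Q))"
      unfolding s_def using SK[of Q Q'] by (simp add: matrix_vector_mult_diff_distrib inner_add_left inner_diff_right)
    have sw: "u \<bullet> (W *v (K *v s)) = s \<bullet> (K *v (W *v u))"
      using SW[of u "K *v s"] SK[of s "W *v u"] by (simp add: inner_commute)
    have "2 * (E (Suc n) - E n) = u \<bullet> (W *v (P' - P)) + s \<bullet> (K *v (Q' - Q))"
      unfolding E_def' using e1 e2 unfolding P_def P'_def Q_def Q'_def by simp
    also have "\<dots> = dt * (u \<bullet> (W *v F))"
      unfolding dP dQ using sw
      by (simp add: matrix_vector_mult_diff_distrib matrix_vector_mult_scaleR inner_diff_right)
    finally have eq: "2 * (E (Suc n) - E n) = dt * (P \<bullet> (W *v F) + P' \<bullet> (W *v F))"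
      unfolding u_def by (simp add: inner_add_left)
    define nf where "nf = sqrt (F \<bullet> (W *v F))"
    have nfeq: "nf = norm_Minv M (f n)" unfolding nf_def norm_Minv_def F_def W_def by simp
    have nf0: "0 \<le> nf" unfolding nf_def using PW[of F] by simp
    have a1: "sqrt (P \<bullet> (W *v P)) \<le> sqrt 2 * sqrt (E n)"
    proof -
      have "P \<bullet> (W *v P) \<le> 2 * E n" unfolding E_def' P_def using PK[of "q n"] by simp
      hence "sqrt (P \<bullet> (W *v P)) \<le> sqrt (2 * E n)" by (rule real_sqrt_le_mono)
      thus ?thesis by (simp add: real_sqrt_mult)
    qed
    have a2: "sqrt (P' \<bullet> (W *v P')) \<le> sqrt 2 * sqrt (E (Suc n))"
    proof -
      have "P' \<bullet> (W *v P') \<le> 2 * E (Suc n)" unfolding E_def' P'_def using PK[of "q (Suc n)"] by simp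
      hence "sqrt (P' \<bullet> (W *v P')) \<le> sqrt (2 * E (Suc n))" by (rule real_sqrt_le_mono)
      thus ?thesis by (simp add: real_sqrt_mult)
    qed
    have c1: "\<bar>P \<bullet> (W *v F)\<bar> \<le> sqrt 2 * sqrt (E n) * nf"
      using cs_mat[OF SW PW, of P F] a1 nf0 unfolding nf_def[symmetric]
      by (meson mult_right_mono order_trans)
    have c2: "\<bar>P' \<bullet> (W *v F)\<bar> \<le> sqrt 2 * sqrt (E (Suc n)) * nf"
      using cs_mat[OF SW PW, of P' F] a2 nf0 unfolding nf_def[symmetric]
      by (meson mult_right_mono order_trans)
    define X where "X = P \<bullet> (W *v F)"
    define Y where "Y = P' \<bullet> (W *v F)"
    define S where "S = sqrt (E (Suc n)) + sqrt (E n)"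
    have s1: "0 \<le> sqrt (E n)" using E0[of n] by simp
    have s2: "0 \<le> sqrt (E (Suc n))" using E0[of "Suc n"] by simp
    have XY: "\<bar>X + Y\<bar> \<le> sqrt 2 * sqrt (E n) * nf + sqrt 2 * sqrt (E (Suc n)) * nf"
      unfolding X_def Y_def by (rule order_trans[OF abs_triangle_ineq add_mono[OF c1 c2]])
    have "2 * \<bar>E (Suc n) - E n\<bar> = \<bar>2 * (E (Suc n) - E n)\<bar>" by (simp only: abs_mult abs_numeral)
    also have "\<dots> = dt * \<bar>X + Y\<bar>" unfolding eq X_def Y_def using assms(3) by (simp add: abs_mult)
    also have "\<dots> \<le> dt * (sqrt 2 * sqrt (E n) * nf + sqrt 2 * sqrt (E (Suc n)) * nf)"
      using XY assms(3) by (simp add: mult_left_mono)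
    also have "\<dots> = sqrt 2 * ((dt * nf) * S)"
      unfolding S_def by (simp add: algebra_simps)
    finally have "\<bar>E (Suc n) - E n\<bar> \<le> (sqrt 2 * ((dt * nf) * S)) / 2"
      by (rule half_le)
    also have "\<dots> = (sqrt 2 / 2) * ((dt * nf) * S)" by simp
    also have "sqrt 2 / 2 = 1 / sqrt (2::real)"
    proof -
      have h: "sqrt 2 * sqrt 2 = (2::real)" by simp
      have "sqrt 2 \<noteq> (0::real)" by simp
      thus ?thesis using h by (simp add: field_simps)
    qed
    also have "(1 / sqrt 2) * ((dt * nf) * S) = (dt * (1 / sqrt 2) * nf) * S"
      by (simp add: mult_ac)
    finally have bound: "\<bar>E (Suc n) - E n\<bar> \<le> (dt * (1 / sqrt 2) * nf) * S" .
    have fac: "E (Suc n) - E n = (sqrt (E (Suc n)) - sqrt (E n)) * S"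
    proof -
      have "(sqrt (E (Suc n)) - sqrt (E n)) * S = (sqrt (E (Suc n)))^2 - (sqrt (E n))^2"
        unfolding S_def by (simp add: power2_eq_square algebra_simps)
      also have "\<dots> = E (Suc n) - E n" using E0[of n] E0[of "Suc n"] by simp
      finally show ?thesis by simp
    qed
    show ?thesis
    proof (cases "S = 0")
      case True
      hence "sqrt (E (Suc n)) = 0" "sqrt (E n) = 0" using s1 s2 unfolding S_def by linarith+
      thus ?thesis using nf0 assms(3) nfeq by simp
    next
      case False
      hence pos: "S > 0" using s1 s2 unfolding S_def by linarith
      have "\<bar>sqrt (E (Suc n)) - sqrt (E n)\<bar> * S \<le> (dt * (1 / sqrt 2) * nf) * S"
        using bound pos unfolding fac by (simp add: abs_mult)
      hence "\<bar>sqrt (E (Suc n)) - sqrt (E n)\<bar> \<le> dt * (1 / sqrt 2) * nf"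
        using pos by (rule mult_right_le_imp_le)
      thus ?thesis using nfeq by simp
    qed
  qed
  show ?thesis
  proof (induction n)
    case 0 then show ?case by simp
  next
    case (Suc n)
    have "\<bar>sqrt (E (Suc n)) - sqrt (E 0)\<bar> \<le> \<bar>sqrt (E (Suc n)) - sqrt (E n)\<bar> + \<bar>sqrt (E n) - sqrt (E 0)\<bar>" by simp
    also have "\<dots> \<le> dt * (1 / sqrt 2) * norm_Minv M (f n) + dt * (1 / sqrt 2) * (\<Sum>k<n. norm_Minv M (f k))"
      using step[of n] Suc.IH unfolding E_def by simp
    also have "\<dots> = dt * (1 / sqrt 2) * (\<Sum>k<Suc n. norm_Minv M (f k))" by (simp add: algebra_simps)
    finally show ?case unfolding E_def .
  qed
qed

end
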